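(* Let $N>2$ and assume (H1)–(H4). For $a>0$ let $v_a$ be the solution of $(P_a)$ on $[0,R^{2-N}]$. Then $\max_{[0,R^{2-N}]}|v_a|\to\infty$ as $a\to\infty$.
   Context: Fix $N>2$, $R>0$, $0<\delta<2$. The function $f:\mathbb{R}\setminus\{0\}\to\mathbb{R}$ is odd and locally Lipschitz and satisfies: (H1) there exist $p>1$ and a function $g$ with $f(u)=|u|^{p-1}u+g(u)$ for all sufficiently large $|u|$, and $\lim_{u\to\infty}|g(u)|/|u|^{p}=0$; (H2) there exist $0<q<1$ and a locally Lipschitz $g_1:\mathbb{R}\to\mathbb{R}$ with $g_1(0)=0$ such that $f(u)=-\frac{1}{|u|^{q-1}u}+g_1(u)$ for all sufficiently small $|u|\neq 0$; (H3) $f$ has a unique positive zero $\beta$, with $f<0$ on $(0,\beta)$ and $f>0$ on $(\beta,\infty)$. $K:[R,\infty)\to(0,\infty)$ with $K$ and $K'$ continuous, and (H4) $\frac{rK'(r)}{K(r)}>-2(N-1)$ on $[R,\infty)$, and there exist $K_0,K_1>0$ and exponents with $N+q(N-2)<\alpha_1\leq\alpha<2(N-1)$ such that $K_0r^{-\alpha}\leq K(r)\leq K_1r^{-\alpha_1}$ on $[R,\infty)$. Define $h(t)=\frac{t^{\frac{2(N-1)}{2-N}}K(t^{\frac{1}{2-N}})}{(N-2)^2}$ for $0<t\le R^{2-N}$. The initial value problem $(P_a)$ is $$v''(t)+h(t)f(v(t))+\frac{v(t)}{t^{2-\delta}}=0\ (t>0),\qquad v(0)=0,\ v'(0)=a,$$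 understood in the integrated sense: $v\in C^1[0,R^{2-N}]$, $v(0)=0$, $h f(v)$ integrable, and $v'(t)=a-\int_0^t h(s)f(v(s))\,ds-\int_0^t s^{\delta-2}v(s)\,ds$ for all $t\in[0,R^{2-N}]$. This solution exists on all of $[0,R^{2-N}]$ and is unique. *)

theory Defs
  imports "HOL-Analysis.Analysis"
begin

definition loc_lipschitz_on :: "real set \<Rightarrow> (real \<Rightarrow> real) \<Rightarrow> bool" where
  "loc_lipschitz_on S f \<longleftrightarrow>
     (\<forall>u\<in>S. \<exists>e>0. \<exists>L. \<forall>x\<in>ball u e \<inter> S. \<forall>y\<in>ball u e \<inter> S. \<bar>f x - f y\<bar> \<le> L * \<bar>x - y\<bar>)"

definition hfun :: "nat \<Rightarrow> (real \<Rightarrow> real) \<Rightarrow> real \<Rightarrow> real" where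
  "hfun N K t = t powr (2 * (real N - 1) / (2 - real N)) * K (t powr (1 / (2 - real N)))
                / (real N - 2)\<^sup>2"

text \<open>v solves (P_a) on [0,T] in the integrated sense.\<close>
definition solves_Pa ::
  "(real \<Rightarrow> real) \<Rightarrow> (real \<Rightarrow> real) \<Rightarrow> real \<Rightarrow> real \<Rightarrow> real \<Rightarrow> (real \<Rightarrow> real) \<Rightarrow> bool" where
  "solves_Pa h f \<delta> T a v \<longleftrightarrow>
     (\<exists>v'. continuous_on {0..T} v' \<and>
        (\<forall>t\<in>{0..T}. (v has_real_derivative v' t) (at t within {0..T})) \<and>
        v 0 = 0 \<and>
        (\<lambda>s. h s * f (v s)) absolutely_integrable_on {0..T} \<and>
        (\<forall>t\<in>{0..T}. (\<lambda>s. s powr (\<delta> - 2) * v s) integrable_on {0..t} \<and>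
           v' t = a - integral {0..t} (\<lambda>s. h s * f (v s))
                    - integral {0..t} (\<lambda>s. s powr (\<delta> - 2) * v s)))"

end

theory Submission
  imports Defs
begin


lemma loclip_cont:
  assumes "loc_lipschitz_on S f" shows "continuous_on S f"
  unfolding continuous_on_iff
proof (intro ballI allI impI)
  fix u e assume u: "u \<in> S" and e: "(0::real) < e"
  obtain e0 L where e0: "e0 > 0" and L: "\<forall>x\<in>ball u e0 \<inter> S. \<forall>y\<in>ball u e0 \<inter> S. \<bar>f x - f y\<bar> \<le> L * \<bar>x - y\<bar>"
    using assms u unfolding loc_lipschitz_on_def by blast
  define d where "d = min e0 (e / (\<bar>L\<bar> + 1))"
  have d: "d > 0" using e0 e by (simp add: d_def)
  show "\<exists>d>0. \<forall>x'\<in>S. dist x' u < d \<longrightarrow> dist (f x') (f u) < e"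
  proof (intro exI[of _ d] conjI ballI impI d)
    fix x assume x: "x \<in> S" "dist x u < d"
    have xb: "x \<in> ball u e0 \<inter> S" using x d_def by (auto simp: dist_commute)
    have ub: "u \<in> ball u e0 \<inter> S" using u e0 by auto
    have "\<bar>f x - f u\<bar> \<le> L * \<bar>x - u\<bar>" using L xb ub by blast
    also have "\<dots> \<le> \<bar>L\<bar> * \<bar>x - u\<bar>" by (simp add: mult_right_mono)
    also have "\<dots> \<le> \<bar>L\<bar> * d" using x by (simp add: dist_real_def mult_left_mono)
    also have "\<dots> < e"
    proof -
      have "d \<le> e / (\<bar>L\<bar> + 1)" by (simp add: d_def)
      then have "\<bar>L\<bar> * d \<le> \<bar>L\<bar> * (e / (\<bar>L\<bar> + 1))" by (rule mult_left_mono) simp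
      also have "\<dots> < e" using e by (simp add: field_simps)
      finally show ?thesis .
    qed
    finally show "dist (f x) (f u) < e" by (simp add: dist_real_def)
  qed
qed

lemma ftc_int:
  fixes v v' :: "real \<Rightarrow> real"
  assumes s: "0 \<le> s" "s \<le> T"
    and der: "\<forall>t\<in>{0..T}. (v has_real_derivative v' t) (at t within {0..T})"
  shows "(v' has_integral (v s - v 0)) {0..s}"
proof (rule fundamental_theorem_of_calculus[OF s(1)])
  fix x assume x: "x \<in> {0..s}"
  then have "(v has_real_derivative v' x) (at x within {0..T})" using der s by auto
  then have "(v has_real_derivative v' x) (at x within {0..s})"
    by (rule has_field_derivative_subset) (use s in auto)
  then show "(v has_vector_derivative v' x) (at x within {0..s})"
    by (simp add: has_real_derivative_iff_has_vector_derivative)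
qed

lemma ftc_lo:
  fixes v v' :: "real \<Rightarrow> real"
  assumes s: "0 \<le> s" "s \<le> T"
    and der: "\<forall>t\<in>{0..T}. (v has_real_derivative v' t) (at t within {0..T})"
    and b: "\<forall>t\<in>{0..s}. lo \<le> v' t"
  shows "lo * s \<le> v s - v 0"
proof -
  have "((\<lambda>x. lo) has_integral lo * s) {0..s}"
    using has_integral_const_real[of lo 0 s] s by (auto simp: mult.commute)
  then show ?thesis using b ftc_int[OF s der] by (meson has_integral_le)
qed

lemma ftc_hi:
  fixes v v' :: "real \<Rightarrow> real"
  assumes s: "0 \<le> s" "s \<le> T"
    and der: "\<forall>t\<in>{0..T}. (v has_real_derivative v' t) (at t within {0..T})"
    and b: "\<forall>t\<in>{0..s}. v' t \<le> hi"
  shows "v s - v 0 \<le> hi * s"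
proof -
  have "((\<lambda>x. hi) has_integral hi * s) {0..s}"
    using has_integral_const_real[of hi 0 s] s by (auto simp: mult.commute)
  then show ?thesis using b ftc_int[OF s der] by (meson has_integral_le)
qed



lemma f_lower:
  fixes f :: "real \<Rightarrow> real"
  assumes cont: "continuous_on (- {0}) f"
    and H2: "\<exists>g1 \<epsilon>. loc_lipschitz_on UNIV g1 \<and> g1 0 = 0 \<and> \<epsilon> > 0 \<and>
                 (\<forall>u. 0 < \<bar>u\<bar> \<and> \<bar>u\<bar> < \<epsilon> \<longrightarrow> f u = - 1 / (\<bar>u\<bar> powr (q - 1) * u) + g1 u)"
    and H3: "\<exists>\<beta>>0. f \<beta> = 0 \<and> (\<forall>u>0. f u = 0 \<longrightarrow> u = \<beta>)
                 \<and> (\<forall>u. 0 < u \<and> u < \<beta> \<longrightarrow> f u < 0) \<and> (\<forall>u>\<beta>. f u > 0)"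
  shows "\<exists>B\<ge>0. \<forall>u>0. - (u powr (- q)) - B \<le> f u"
proof -
  obtain g1 \<epsilon> where g1: "loc_lipschitz_on UNIV g1" and e: "\<epsilon> > 0"
    and fe: "\<forall>u. 0 < \<bar>u\<bar> \<and> \<bar>u\<bar> < \<epsilon> \<longrightarrow> f u = - 1 / (\<bar>u\<bar> powr (q - 1) * u) + g1 u"
    using H2 by blast
  obtain \<beta> where b: "\<beta> > 0" "\<forall>u>\<beta>. f u > 0" using H3 by blast
  have cg: "continuous_on {0..\<epsilon>} g1" using loclip_cont[OF g1] continuous_on_subset by blast
  obtain b1 where b1: "\<forall>y\<in>{0..\<epsilon>}. g1 b1 \<le> g1 y"
    using continuous_attains_inf[OF compact_Icc _ cg] e by auto
  define \<beta>' where "\<beta>' = max \<beta> \<epsilon>"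
  have cf: "continuous_on {\<epsilon>..\<beta>'} f" using continuous_on_subset[OF cont] e by auto
  obtain b2 where b2: "\<forall>y\<in>{\<epsilon>..\<beta>'}. f b2 \<le> f y"
    using continuous_attains_inf[OF compact_Icc _ cf] e \<beta>'_def by fastforce
  define B where "B = max 0 (max (- g1 b1) (- f b2))"
  show ?thesis
  proof (intro exI[of _ B] conjI allI impI)
    show "0 \<le> B" by (simp add: B_def)
    fix u :: real assume u: "u > 0"
    have pq: "u powr (- q) \<ge> 0" by simp
    show "- (u powr (- q)) - B \<le> f u"
    proof (cases "u < \<epsilon>")
      case True
      have "u powr (q - 1) * u = u powr q"
        using u by (simp add: powr_diff)
      then have "f u = - (u powr (- q)) + g1 u" using fe u True
        by (simp add: powr_minus_divide)
      moreover have "g1 u \<ge> g1 b1" using b1 u True by auto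
      then have "g1 u \<ge> - B" by (simp add: B_def)
      ultimately show ?thesis by linarith
    next
      case False
      show ?thesis
      proof (cases "u \<le> \<beta>'")
        case True
        then have "f u \<ge> f b2" using b2 False by auto
        then have "f u \<ge> - B" by (simp add: B_def)
        then show ?thesis using pq by linarith
      next
        case F2: False
        then have "f u > 0" using b \<beta>'_def by auto
        then show ?thesis using pq \<open>0 \<le> B\<close> by linarith
      qed
    qed
  qed
qed

lemma f_upper:
  fixes f :: "real \<Rightarrow> real"
  assumes cont: "continuous_on (- {0}) f"
    and H3: "\<exists>\<beta>>0. f \<beta> = 0 \<and> (\<forall>u>0. f u = 0 \<longrightarrow> u = \<beta>)
                 \<and> (\<forall>u. 0 < u \<and> u < \<beta> \<longrightarrow> f u < 0) \<and> (\<forall>u>\<beta>. f u > 0)"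
  shows "\<exists>C\<ge>0. \<forall>u. 0 < u \<and> u \<le> M \<longrightarrow> f u \<le> C"
proof -
  obtain \<beta> where b: "\<beta> > 0" "\<forall>u. 0 < u \<and> u < \<beta> \<longrightarrow> f u < 0" using H3 by blast
  define M' where "M' = max \<beta> M"
  have cf: "continuous_on {\<beta>..M'} f" using continuous_on_subset[OF cont] b by auto
  obtain b2 where b2: "\<forall>y\<in>{\<beta>..M'}. f y \<le> f b2"
    using continuous_attains_sup[OF compact_Icc _ cf] M'_def by fastforce
  show ?thesis
  proof (intro exI[of _ "max 0 (f b2)"] conjI allI impI)
    fix u assume u: "0 < u \<and> u \<le> M"
    show "f u \<le> max 0 (f b2)"
    proof (cases "u < \<beta>")
      case True then show ?thesis using b u by force
    next
      case False
      then have "u \<in> {\<beta>..M'}" using u M'_def by auto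
      then show ?thesis using b2 by fastforce
    qed
  qed simp
qed



lemma h_bound:
  fixes N :: nat and K :: "real \<Rightarrow> real"
  assumes N: "N > 2" and R: "R > 0"
    and Kb: "\<forall>r\<ge>R. K r > 0 \<and> K r \<le> K1 * r powr (- \<alpha>1)"
    and s: "0 \<le> s" "s \<le> R powr (2 - real N)"
  shows "0 \<le> hfun N K s \<and> hfun N K s \<le> K1 / (real N - 2)\<^sup>2 * s powr (- ((2 * (real N - 1) - \<alpha>1) / (real N - 2)))"
proof (cases "s = 0")
  case True then show ?thesis by (simp add: hfun_def)
next
  case False
  then have s0: "s > 0" using s by auto
  define r where "r = s powr (1 / (2 - real N))"
  have e: "1 / (2 - real N) \<le> 0" using N by simp
  have "(R powr (2 - real N)) powr (1 / (2 - real N)) \<le> r"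
    unfolding r_def by (rule powr_mono2'[OF e s0 s(2)])
  moreover have "(R powr (2 - real N)) powr (1 / (2 - real N)) = R"
    using N R by (simp add: powr_powr)
  ultimately have rR: "r \<ge> R" by simp
  have Kr: "0 < K r" "K r \<le> K1 * r powr (- \<alpha>1)" using Kb rR by auto
  have rp: "r powr (- \<alpha>1) = s powr (- \<alpha>1 / (2 - real N))"
    unfolding r_def using s0 by (simp add: powr_powr)
  have d: "(real N - 2)\<^sup>2 > 0" using N by simp
  have hK: "hfun N K s = s powr (2 * (real N - 1) / (2 - real N)) * K r / (real N - 2)\<^sup>2"
    by (simp add: hfun_def r_def)
  have "hfun N K s \<le> s powr (2 * (real N - 1) / (2 - real N)) * (K1 * s powr (- \<alpha>1 / (2 - real N))) / (real N - 2)\<^sup>2"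
    unfolding hK using Kr d rp by (intro divide_right_mono mult_left_mono) auto
  also have "\<dots> = K1 / (real N - 2)\<^sup>2 * (s powr (2 * (real N - 1) / (2 - real N)) * s powr (- \<alpha>1 / (2 - real N)))"
    by (simp add: field_simps)
  also have "s powr (2 * (real N - 1) / (2 - real N)) * s powr (- \<alpha>1 / (2 - real N)) = s powr (2 * (real N - 1) / (2 - real N) + - \<alpha>1 / (2 - real N))"
    by (rule powr_add[symmetric])
  also have "2 * (real N - 1) / (2 - real N) + - \<alpha>1 / (2 - real N) = - ((2 * (real N - 1) - \<alpha>1) / (real N - 2))"
  proof -
    have "2 * (real N - 1) / (2 - real N) + - \<alpha>1 / (2 - real N) = (2 * (real N - 1) - \<alpha>1) / (2 - real N)"
      by (simp add: diff_divide_distrib)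
    also have "\<dots> = - ((2 * (real N - 1) - \<alpha>1) / (real N - 2))"
      by (metis minus_diff_eq divide_minus_right)
    finally show ?thesis .
  qed
  finally show ?thesis using hK Kr d by simp
qed



lemma intcm: "f integrable_on S \<Longrightarrow> (\<lambda>x. (c::real) * f x) integrable_on S"
  using integrable_cmul[of f S c] by simp

lemma intadd: "(f::real\<Rightarrow>real) integrable_on S \<Longrightarrow> g integrable_on S \<Longrightarrow> (\<lambda>x. f x + g x) integrable_on S"
  unfolding integrable_on_def by (auto intro: has_integral_add)

lemma core:
  fixes v v' h f :: "real \<Rightarrow> real" and T \<tau> \<delta> a c1 \<gamma> q B C M :: real
  assumes T: "0 < \<tau>" "\<tau> \<le> T" and \<delta>: "\<delta> > 0" and \<tau>\<delta>: "\<tau> powr \<delta> / \<delta> \<le> 1/4"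
  and vc: "continuous_on {0..T} v'"
  and der: "\<forall>t\<in>{0..T}. (v has_real_derivative v' t) (at t within {0..T})"
  and v0: "v 0 = 0"
  and hfi: "(\<lambda>s. h s * f (v s)) integrable_on {0..T}"
  and eq: "\<forall>t\<in>{0..T}. (\<lambda>s. s powr (\<delta> - 2) * v s) integrable_on {0..t} \<and>
           v' t = a - integral {0..t} (\<lambda>s. h s * f (v s)) - integral {0..t} (\<lambda>s. s powr (\<delta> - 2) * v s)"
  and hb: "\<forall>s\<in>{0..T}. 0 \<le> h s \<and> h s \<le> c1 * s powr (- \<gamma>)"
  and gq: "\<gamma> + q < 1" "q > 0" "c1 \<ge> 0"
  and fl: "\<forall>u>0. - (u powr (- q)) - B \<le> f u" "B \<ge> 0"
  and fu: "\<forall>u. 0 < u \<and> u \<le> M \<longrightarrow> f u \<le> C" "C \<ge> 0"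
  and vM: "\<forall>t\<in>{0..T}. v t \<le> M"
  and a: "a \<ge> 1" "a * \<tau> / 2 > M"
  and aD: "a > 4 * (C * c1 * (T powr (- \<gamma> + 1) / (- \<gamma> + 1)))
              + integral {0..T} (\<lambda>s. c1 * (2 powr q * s powr (- \<gamma> - q) + B * s powr (- \<gamma>)))"
  shows False
proof -
  define m where "m s = c1 * (2 powr q * s powr (- \<gamma> - q) + B * s powr (- \<gamma>))" for s :: real
  define D where "D = integral {0..T} m"
  define E where "E = C * c1 * (T powr (- \<gamma> + 1) / (- \<gamma> + 1))"
  have T0: "0 \<le> T" using T by simp
  have g1: "- \<gamma> > -1" "- \<gamma> - q > -1" using gq by auto
  have pint: "((\<lambda>s. s powr (- \<gamma>)) has_integral (T powr (- \<gamma> + 1) / (- \<gamma> + 1))) {0..T}"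
    by (rule has_integral_powr_from_0[OF g1(1) T0])
  have mi: "m integrable_on {0..T}"
    unfolding m_def
    by (intro intcm intadd integrable_on_powr_from_0 g1 T0)
  have m0: "\<forall>s\<in>{0..T}. 0 \<le> m s" using gq fl by (auto simp: m_def)
  have D0: "D \<ge> 0" unfolding D_def using m0 mi by (intro integral_nonneg) auto
  have mr: "integral {0..r} m \<le> D" if "r \<in> {0..T}" for r
    unfolding D_def using that m0 mi
    by (intro integral_subset_le integrable_on_subinterval[OF mi]) auto
  have h00: "h 0 = 0" using hb T0 by force
  have v'0: "v' 0 = a" using eq T0 by simp
  define S where "S = {0..\<tau>} \<inter> v' -` {..a/2}"
  show False
  proof (cases "S = {}")
    case True
    then have "\<forall>t\<in>{0..\<tau>}. a/2 \<le> v' t" by (force simp: S_def)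
    then have "a/2 * \<tau> \<le> v \<tau> - v 0" by (intro ftc_lo[OF _ T(2) der]) (use T in auto)
    moreover have "v \<tau> \<le> M" using vM T by auto
    ultimately show False using a v0 by (simp add: mult.commute)
  next
    case False
    have cS: "closed S" unfolding S_def
      by (intro continuous_closed_preimage continuous_on_subset[OF vc]) (use T in auto)
    have bS: "bdd_below S" unfolding S_def by (auto intro: bdd_belowI[of _ 0])
    define ts where "ts = Inf S"
    have tsS: "ts \<in> S" unfolding ts_def by (rule closed_contains_Inf[OF False bS cS])
    then have ts: "0 \<le> ts" "ts \<le> \<tau>" "v' ts \<le> a/2" by (auto simp: S_def)
    have tsT: "ts \<le> T" using ts T by simp
    have before: "a/2 < v' s" if "0 \<le> s" "s < ts" for s
    proof (rule ccontr)
      assume "\<not> a/2 < v' s"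
      then have "s \<in> S" using that ts by (auto simp: S_def)
      then have "ts \<le> s" unfolding ts_def using bS by (rule cInf_lower)
      then show False using that by simp
    qed
    have "\<exists>x. 0 \<le> x \<and> x \<le> ts \<and> v' x = a/2"
      by (rule IVT2') (use ts v'0 a continuous_on_subset[OF vc, of "{0..ts}"] tsT in auto)
    then obtain x where x: "0 \<le> x" "x \<le> ts" "v' x = a/2" by blast
    have "x = ts" using before[of x] x by force
    then have vts: "v' ts = a/2" using x by simp
    have lo: "\<forall>s\<in>{0..ts}. a/2 \<le> v' s"
      using before vts by (metis atLeastAtMost_iff less_eq_real_def order_le_less)
    have vlo: "a/2 * s \<le> v s" if "s \<in> {0..ts}" for s
      using ftc_lo[of s T v v' "a/2"] that tsT der lo v0 by auto
    have hi: "v' r \<le> a + D" if r: "r \<in> {0..ts}" for r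
    proof -
      have rT: "r \<in> {0..T}" using r tsT by auto
      have I2: "0 \<le> integral {0..r} (\<lambda>s. s powr (\<delta> - 2) * v s)"
      proof (rule integral_nonneg)
        show "(\<lambda>s. s powr (\<delta> - 2) * v s) integrable_on {0..r}" using eq rT by blast
        fix s assume s: "s \<in> {0..r}"
        then have "a/2 * s \<le> v s" using vlo[of s] r by auto
        moreover have "0 \<le> a/2 * s" using a s by auto
        ultimately have "0 \<le> v s" by linarith
        then show "0 \<le> s powr (\<delta> - 2) * v s" by simp
      qed
      have I1: "integral {0..r} (\<lambda>s. - m s) \<le> integral {0..r} (\<lambda>s. h s * f (v s))"
      proof (rule integral_le)
        show "(\<lambda>s. - m s) integrable_on {0..r}"
          using integrable_on_subinterval[OF mi, of 0 r] rT by (auto intro: integrable_neg)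
        show "(\<lambda>s. h s * f (v s)) integrable_on {0..r}"
          using integrable_on_subinterval[OF hfi, of 0 r] rT by auto
        fix s assume s: "s \<in> {0..r}"
        show "- m s \<le> h s * f (v s)"
        proof (cases "s = 0")
          case True then show ?thesis using h00 by (simp add: m_def)
        next
          case False
          then have s0: "s > 0" using s by auto
          have sT: "s \<in> {0..T}" using s rT by auto
          have "a/2 * s \<le> v s" using vlo[of s] s r by auto
          moreover have "1/2 * s \<le> a/2 * s" by (rule mult_right_mono) (use a s0 in auto)
          ultimately have vs: "s/2 \<le> v s" by linarith
          have vp: "v s > 0" using vs s0 by linarith
          have "(v s) powr (- q) \<le> (s/2) powr (- q)"
            by (rule powr_mono2') (use gq s0 vs in auto)
          then have fv: "- ((s/2) powr (- q)) - B \<le> f (v s)" using fl vp by force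
          have hs: "0 \<le> h s" "h s \<le> c1 * s powr (- \<gamma>)" using hb sT by auto
          have "- (c1 * s powr (- \<gamma>) * ((s/2) powr (- q) + B)) \<le> - (h s * ((s/2) powr (- q) + B))"
            using hs fl(2) by (intro le_imp_neg_le mult_right_mono) auto
          also have "\<dots> = h s * (- ((s/2) powr (- q)) - B)" by (simp add: algebra_simps)
          also have "\<dots> \<le> h s * f (v s)" using fv hs by (intro mult_left_mono) auto
          finally have *: "- (c1 * s powr (- \<gamma>) * ((s/2) powr (- q) + B)) \<le> h s * f (v s)" .
          have "(s/2) powr (- q) = 2 powr q * s powr (- q)"
          proof -
            have "(s/2) powr (- q) = s powr (- q) / 2 powr (- q)"
              using s0 by (simp add: powr_divide)
            also have "2 powr (- q) = inverse (2 powr q)" by (rule powr_minus)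
            finally show ?thesis by (simp add: field_simps)
          qed
          moreover have "s powr (- \<gamma> - q) = s powr (- \<gamma>) * s powr (- q)"
            using powr_add[of s "- \<gamma>" "- q"] by simp
          ultimately have "c1 * s powr (- \<gamma>) * ((s/2) powr (- q) + B) = m s"
            unfolding m_def by (simp add: algebra_simps)
          then show ?thesis using * by simp
        qed
      qed
      have "integral {0..r} (\<lambda>s. - m s) = - integral {0..r} m" by (rule integral_neg)
      then have "- D \<le> integral {0..r} (\<lambda>s. h s * f (v s))" using I1 mr[OF rT] by linarith
      then show ?thesis using eq rT I2 by auto
    qed
    have vhi: "v s \<le> (a + D) * s" if "s \<in> {0..ts}" for s
      using ftc_hi[of s T v v' "a + D"] that tsT der hi v0 by auto
    have tsT': "ts \<in> {0..T}" using ts tsT by auto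
    have J1: "integral {0..ts} (\<lambda>s. h s * f (v s)) \<le> E"
    proof -
      have "integral {0..ts} (\<lambda>s. h s * f (v s)) \<le> integral {0..ts} (\<lambda>s. C * c1 * s powr (- \<gamma>))"
      proof (rule integral_le)
        show "(\<lambda>s. h s * f (v s)) integrable_on {0..ts}"
          using integrable_on_subinterval[OF hfi, of 0 ts] tsT' by auto
        show "(\<lambda>s. C * c1 * s powr (- \<gamma>)) integrable_on {0..ts}"
          by (intro intcm integrable_on_powr_from_0 g1 ts)
        fix s assume s: "s \<in> {0..ts}"
        show "h s * f (v s) \<le> C * c1 * s powr (- \<gamma>)"
        proof (cases "s = 0")
          case True then show ?thesis using h00 by simp
        next
          case False
          then have s0: "s > 0" using s by auto
          have sT: "s \<in> {0..T}" using s tsT by auto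
          have "0 < a/2 * s" using a s0 by simp
          then have vp: "v s > 0" using vlo[OF s] by linarith
          have fv: "f (v s) \<le> C" using fu vp vM sT by auto
          have hs: "0 \<le> h s" "h s \<le> c1 * s powr (- \<gamma>)" using hb sT by auto
          have "h s * f (v s) \<le> h s * C" using hs fv by (intro mult_left_mono) auto
          also have "\<dots> \<le> c1 * s powr (- \<gamma>) * C" using hs fu(2) by (intro mult_right_mono) auto
          finally show ?thesis by (simp add: algebra_simps)
        qed
      qed
      also have "\<dots> = C * c1 * integral {0..ts} (\<lambda>s. s powr (- \<gamma>))" by simp
      also have "\<dots> \<le> C * c1 * integral {0..T} (\<lambda>s. s powr (- \<gamma>))"
        using fu gq tsT' 
        by (intro mult_left_mono integral_subset_le integrable_on_powr_from_0 g1) auto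
      also have "\<dots> = E" unfolding E_def using pint by (simp add: integral_unique)
      finally show ?thesis .
    qed
    have J2: "integral {0..ts} (\<lambda>s. s powr (\<delta> - 2) * v s) \<le> (a + D) / 4"
    proof -
      have dd: "\<delta> - 1 > -1" using \<delta> by simp
      have "integral {0..ts} (\<lambda>s. s powr (\<delta> - 2) * v s) \<le> integral {0..ts} (\<lambda>s. (a + D) * s powr (\<delta> - 1))"
      proof (rule integral_le)
        show "(\<lambda>s. s powr (\<delta> - 2) * v s) integrable_on {0..ts}" using eq tsT' by blast
        show "(\<lambda>s. (a + D) * s powr (\<delta> - 1)) integrable_on {0..ts}"
          by (intro intcm integrable_on_powr_from_0 dd ts)
        fix s assume s: "s \<in> {0..ts}"
        show "s powr (\<delta> - 2) * v s \<le> (a + D) * s powr (\<delta> - 1)"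
        proof (cases "s = 0")
          case True then show ?thesis using v0 by simp
        next
          case False
          then have s0: "s > 0" using s by auto
          have "s powr (\<delta> - 2) * v s \<le> s powr (\<delta> - 2) * ((a + D) * s)"
            using vhi[OF s] by (intro mult_left_mono) auto
          also have "s powr (\<delta> - 2) * s = s powr (\<delta> - 1)"
            using s0 by (simp add: powr_diff power2_eq_square)
          then have "s powr (\<delta> - 2) * ((a + D) * s) = (a + D) * s powr (\<delta> - 1)"
            by (simp add: algebra_simps)
          finally show ?thesis .
        qed
      qed
      also have "\<dots> = (a + D) * (ts powr \<delta> / \<delta>)"
        using has_integral_powr_from_0[OF dd ts(1)] by (simp add: integral_unique)
      also have "\<dots> \<le> (a + D) * (\<tau> powr \<delta> / \<delta>)"
        using D0 a \<delta> ts by (intro mult_left_mono divide_right_mono powr_mono2) auto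
      also have "\<dots> \<le> (a + D) * (1/4)" using D0 a \<tau>\<delta> by (intro mult_left_mono) auto
      finally show ?thesis by simp
    qed
    have "a/2 = a - integral {0..ts} (\<lambda>s. h s * f (v s)) - integral {0..ts} (\<lambda>s. s powr (\<delta> - 2) * v s)"
      using eq tsT' vts by auto
    then have "a \<le> 4 * E + D" using J1 J2 by (simp add: field_simps)
    then show False using aD unfolding E_def D_def m_def by linarith
  qed
qed



theorem lemma2p5:
  fixes N :: nat and R \<delta> p q \<alpha> \<alpha>1 K0 K1 :: real
    and f K K' :: "real \<Rightarrow> real"
    and v :: "real \<Rightarrow> real \<Rightarrow> real"
  assumes N: "N > 2" and R: "R > 0" and \<delta>: "0 < \<delta>" "\<delta> < 2"
    and f_odd: "\<forall>u. f (- u) = - f u"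
    and f_lip: "loc_lipschitz_on (- {0}) f"
    and H1: "p > 1" "\<exists>g M. (\<forall>u. \<bar>u\<bar> \<ge> M \<longrightarrow> f u = \<bar>u\<bar> powr (p - 1) * u + g u)
                 \<and> ((\<lambda>u. \<bar>g u\<bar> / \<bar>u\<bar> powr p) \<longlongrightarrow> 0) at_top"
    and H2: "0 < q" "q < 1" "\<exists>g1 \<epsilon>. loc_lipschitz_on UNIV g1 \<and> g1 0 = 0 \<and> \<epsilon> > 0 \<and>
                 (\<forall>u. 0 < \<bar>u\<bar> \<and> \<bar>u\<bar> < \<epsilon> \<longrightarrow> f u = - 1 / (\<bar>u\<bar> powr (q - 1) * u) + g1 u)"
    and H3: "\<exists>\<beta>>0. f \<beta> = 0 \<and> (\<forall>u>0. f u = 0 \<longrightarrow> u = \<beta>)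
                 \<and> (\<forall>u. 0 < u \<and> u < \<beta> \<longrightarrow> f u < 0) \<and> (\<forall>u>\<beta>. f u > 0)"
    and K_pos: "\<forall>r\<ge>R. K r > 0"
    and K_cont: "continuous_on {R..} K" and K'_cont: "continuous_on {R..} K'"
    and K_deriv: "\<forall>r\<ge>R. (K has_real_derivative K' r) (at r within {R..})"
    and H4: "\<forall>r\<ge>R. r * K' r / K r > - 2 * (real N - 1)"
      "K0 > 0" "K1 > 0" "real N + q * (real N - 2) < \<alpha>1" "\<alpha>1 \<le> \<alpha>" "\<alpha> < 2 * (real N - 1)"
      "\<forall>r\<ge>R. K0 * r powr (- \<alpha>) \<le> K r \<and> K r \<le> K1 * r powr (- \<alpha>1)"
    and sol: "\<forall>a>0. solves_Pa (hfun N K) f \<delta> (R powr (2 - real N)) a (v a)"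
  shows "filterlim (\<lambda>a. SUP t\<in>{0..R powr (2 - real N)}. \<bar>v a t\<bar>) at_top at_top"
proof -
  define T where "T = R powr (2 - real N)"
  have T0: "T > 0" using R by (simp add: T_def)
  have fc: "continuous_on (- {0}) f" by (rule loclip_cont[OF f_lip])
  obtain B where B: "B \<ge> 0" "\<forall>u>0. - (u powr (- q)) - B \<le> f u"
    using f_lower[OF fc H2(3) H3] by blast
  define c1 where "c1 = K1 / (real N - 2)\<^sup>2"
  define \<gamma> where "\<gamma> = (2 * (real N - 1) - \<alpha>1) / (real N - 2)"
  have c10: "c1 \<ge> 0" using H4(3) by (simp add: c1_def)
  have Kb: "\<forall>r\<ge>R. K r > 0 \<and> K r \<le> K1 * r powr (- \<alpha>1)" using K_pos H4(7) by auto
  have hb: "\<forall>s\<in>{0..T}. 0 \<le> hfun N K s \<and> hfun N K s \<le> c1 * s powr (- \<gamma>)"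
    using h_bound[OF N R Kb] unfolding T_def c1_def \<gamma>_def by auto
  have gq: "\<gamma> + q < 1"
  proof -
    have N2: "real N - 2 > 0" using N by simp
    have "2 * (real N - 1) - \<alpha>1 < (1 - q) * (real N - 2)" using H4(4) by (simp add: algebra_simps)
    then have "\<gamma> < 1 - q" unfolding \<gamma>_def using N2 by (simp add: pos_divide_less_eq)
    then show ?thesis by simp
  qed
  define \<tau>0 where "\<tau>0 = (\<delta> / 4) powr (1 / \<delta>)"
  define \<tau> where "\<tau> = min T \<tau>0"
  have \<tau>00: "\<tau>0 > 0" using \<delta> by (simp add: \<tau>0_def)
  have \<tau>: "0 < \<tau>" "\<tau> \<le> T" using T0 \<tau>00 by (auto simp: \<tau>_def)
  have \<tau>\<delta>: "\<tau> powr \<delta> / \<delta> \<le> 1/4"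
  proof -
    have "\<tau> powr \<delta> \<le> \<tau>0 powr \<delta>" using \<tau> \<delta> by (intro powr_mono2) (auto simp: \<tau>_def)
    also have "\<tau>0 powr \<delta> = \<delta> / 4" using \<delta> by (simp add: \<tau>0_def powr_powr)
    finally show ?thesis using \<delta> by (simp add: divide_simps)
  qed
  show ?thesis unfolding filterlim_at_top eventually_at_top_linorder T_def[symmetric]
  proof (intro allI)
    fix Z :: real
    define M where "M = \<bar>Z\<bar>"
    obtain C where C: "C \<ge> 0" "\<forall>u. 0 < u \<and> u \<le> M \<longrightarrow> f u \<le> C"
      using f_upper[OF fc H3] by blast
    define A where "A = max 1 (max (2 * M / \<tau> + 1)
      (4 * (C * c1 * (T powr (- \<gamma> + 1) / (- \<gamma> + 1)))
              + integral {0..T} (\<lambda>s. c1 * (2 powr q * s powr (- \<gamma> - q) + B * s powr (- \<gamma>))) + 1))"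
    show "\<exists>N0. \<forall>a\<ge>N0. Z \<le> (SUP t\<in>{0..T}. \<bar>v a t\<bar>)"
    proof (intro exI[of _ A] allI impI)
      fix a assume aA: "A \<le> a"
      have a1: "a \<ge> 1" using aA by (simp add: A_def)
      have a2: "a * \<tau> / 2 > M"
      proof -
        have "2 * M / \<tau> + 1 \<le> a" using aA by (simp add: A_def)
        then have "(2 * M / \<tau> + 1) * \<tau> \<le> a * \<tau>" using \<tau> by (intro mult_right_mono) auto
        then have "2 * M + \<tau> \<le> a * \<tau>" using \<tau> by (simp add: algebra_simps)
        then show ?thesis using \<tau> by simp
      qed
      have a3: "a > 4 * (C * c1 * (T powr (- \<gamma> + 1) / (- \<gamma> + 1)))
              + integral {0..T} (\<lambda>s. c1 * (2 powr q * s powr (- \<gamma> - q) + B * s powr (- \<gamma>)))"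
        using aA unfolding A_def by linarith
      have "solves_Pa (hfun N K) f \<delta> T a (v a)" using sol a1 T_def by simp
      then obtain v' where vc: "continuous_on {0..T} v'"
        and der: "\<forall>t\<in>{0..T}. (v a has_real_derivative v' t) (at t within {0..T})"
        and v0: "v a 0 = 0"
        and hfa: "(\<lambda>s. hfun N K s * f (v a s)) absolutely_integrable_on {0..T}"
        and eq: "\<forall>t\<in>{0..T}. (\<lambda>s. s powr (\<delta> - 2) * v a s) integrable_on {0..t} \<and>
           v' t = a - integral {0..t} (\<lambda>s. hfun N K s * f (v a s)) - integral {0..t} (\<lambda>s. s powr (\<delta> - 2) * v a s)"
        unfolding solves_Pa_def by blast
      have hfi: "(\<lambda>s. hfun N K s * f (v a s)) integrable_on {0..T}"
        using hfa absolutely_integrable_on_def by blast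
      have "\<exists>t\<in>{0..T}. v a t > M"
      proof (rule ccontr)
        assume "\<not> ?thesis"
        then have vM: "\<forall>t\<in>{0..T}. v a t \<le> M" by force
        show False
          by (rule core[OF \<tau> \<delta>(1) \<tau>\<delta> vc der v0 hfi eq hb gq H2(1) c10 B(2) B(1) C(2) C(1) vM a1 a2 a3])
      qed
      then obtain t where t: "t \<in> {0..T}" "v a t > M" by blast
      have vcont: "continuous_on {0..T} (v a)"
        using der by (intro DERIV_continuous_on) auto
      then have "continuous_on {0..T} (\<lambda>t. \<bar>v a t\<bar>)" by (intro continuous_intros)
      then obtain tm where "\<forall>y\<in>{0..T}. \<bar>v a y\<bar> \<le> \<bar>v a tm\<bar>"
        using continuous_attains_sup[OF compact_Icc, of 0 T] T0 by fastforce
      then have bdd: "bdd_above ((\<lambda>t. \<bar>v a t\<bar>) ` {0..T})" by (auto intro: bdd_aboveI2)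
      have "Z \<le> M" by (simp add: M_def)
      also have "\<dots> \<le> \<bar>v a t\<bar>" using t by simp
      also have "\<dots> \<le> (SUP t\<in>{0..T}. \<bar>v a t\<bar>)" by (rule cSUP_upper[OF t(1) bdd])
      finally show "Z \<le> (SUP t\<in>{0..T}. \<bar>v a t\<bar>)" .
    qed
  qed
qed


end
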